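(* Let $d\ge0$, $0\le n\le d+1$, and $x=e_1z^n\in V_d$. Let $\mu_x\colon V_d\to(\mathfrak g_d^x)^\vee$ be the moment map for the stabilizer $\mathfrak g_d^x$, $\mu_x(v)(\xi)=\frac12(\xi v,v)_{V_d}$. Then the reduced scheme of its zero fibre is $$(\mu_x^{-1}(0))_{\mathrm{red}}=z^{\lfloor\frac{n-1}{2}\rfloor+1}\mathbb C[z]e_1+z^{\lfloor\frac d2\rfloor+1}V_d.$$ In particular, if $d\in\{0,1\}$ and $n=0$, then $\mu_x^{-1}(0)$ has codimension $1$ in $V_d$; otherwise it has codimension $\ge2$.
   Context: $T=\mathbb C^2=\mathbb C\langle e_1,e_2\rangle$ with standard symplectic form $(\,,\,)_T$ and standard $\mathfrak{sl}_2$-action. $V_d=T\otimes\mathbb C[z]/(z^{d+1})$, $\mathfrak g_d=\mathfrak{sl}_2\otimes\mathbb C[z]/(z^{d+1})$ acting by $(\xi z^a)(vz^b)=(\xi v)z^{a+b}$; $\mathfrak g_d^x$ is the stabilizer of $x$ in $\mathfrak g_d$. The symplectic form on $V_d$ is $(f,g)_{V_d}=\mathrm{Res}_{z=0}(f,g)_{T[z]}/z^{d+1}$, with $(\,,\,)_{T[z]}$ the $\mathbb C[z]$-bilinear extension of $(\,,\,)_T$. Subsets such as $z^m\mathbb C[z]e_1$ are understood modulo $z^{d+1}$, as subspaces of $V_d$. *)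

theory Defs
  imports Complex_Main "HOL-Library.Product_Plus" "HOL-Library.Function_Algebras"
begin

text \<open>Elements of T = C^2 are pairs (u1,u2) = u1 e1 + u2 e2.
  Elements of V_d = T[z]/(z^(d+1)) are coefficient sequences v :: nat => T
  with v k = 0 for k > d (v k is the coefficient of z^k).
  Elements of sl2 are 2x2 matrices ((a,b),(c,e)) with a + e = 0, and
  elements of g_d = sl2[z]/(z^(d+1)) are coefficient sequences of such matrices
  vanishing beyond degree d.\<close>

type_synonym T = "complex \<times> complex"
type_synonym mat2 = "(complex \<times> complex) \<times> (complex \<times> complex)"

definition Vd :: "nat \<Rightarrow> (nat \<Rightarrow> T) set" where
  "Vd d = {v. \<forall>k>d. v k = (0, 0)}"

definition sl2 :: "mat2 set" where
  "sl2 = {((a, b), (c, e)). a + e = 0}"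

definition gd :: "nat \<Rightarrow> (nat \<Rightarrow> mat2) set" where
  "gd d = {\<xi>. (\<forall>k. \<xi> k \<in> sl2) \<and> (\<forall>k>d. \<xi> k = ((0, 0), (0, 0)))}"

definition mat_act :: "mat2 \<Rightarrow> T \<Rightarrow> T" where
  "mat_act m u = (fst (fst m) * fst u + snd (fst m) * snd u,
                  fst (snd m) * fst u + snd (snd m) * snd u)"

text \<open>action of g_d on V_d: (xi z^a)(v z^b) = (xi v) z^(a+b), truncated mod z^(d+1)\<close>
definition gact :: "nat \<Rightarrow> (nat \<Rightarrow> mat2) \<Rightarrow> (nat \<Rightarrow> T) \<Rightarrow> (nat \<Rightarrow> T)" where
  "gact d \<xi> v = (\<lambda>k. if k \<le> d then (\<Sum>a\<le>k. mat_act (\<xi> a) (v (k - a))) else (0, 0))"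

definition formT :: "T \<Rightarrow> T \<Rightarrow> complex" where
  "formT u w = fst u * snd w - snd u * fst w"

text \<open>(f,g)_{V_d} = Res_{z=0} (f,g)_{T[z]} / z^(d+1) = coefficient of z^d in (f,g)_{T[z]}\<close>
definition formV :: "nat \<Rightarrow> (nat \<Rightarrow> T) \<Rightarrow> (nat \<Rightarrow> T) \<Rightarrow> complex" where
  "formV d f g = (\<Sum>a\<le>d. formT (f a) (g (d - a)))"

text \<open>the element e1 z^n of V_d (zero if n > d)\<close>
definition xvec :: "nat \<Rightarrow> nat \<Rightarrow> (nat \<Rightarrow> T)" where
  "xvec d n = (\<lambda>k. if k = n \<and> k \<le> d then (1, 0) else (0, 0))"

definition stab :: "nat \<Rightarrow> (nat \<Rightarrow> T) \<Rightarrow> (nat \<Rightarrow> mat2) set" where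
  "stab d x = {\<xi> \<in> gd d. gact d \<xi> x = (\<lambda>k. (0, 0))}"

definition moment :: "nat \<Rightarrow> (nat \<Rightarrow> T) \<Rightarrow> (nat \<Rightarrow> T) \<Rightarrow> (nat \<Rightarrow> mat2) \<Rightarrow> complex" where
  "moment d x v \<xi> = (1/2) * formV d (gact d \<xi> v) v"

text \<open>(closed points of) the zero fibre mu_x^{-1}(0) \<subseteq> V_d\<close>
definition zero_fibre :: "nat \<Rightarrow> (nat \<Rightarrow> T) \<Rightarrow> (nat \<Rightarrow> T) set" where
  "zero_fibre d x = {v \<in> Vd d. \<forall>\<xi> \<in> stab d x. moment d x v \<xi> = 0}"

definition zpow_e1 :: "nat \<Rightarrow> int \<Rightarrow> (nat \<Rightarrow> T) set" where
  "zpow_e1 d m = {v \<in> Vd d. \<forall>k. snd (v k) = 0 \<and> (int k < m \<longrightarrow> fst (v k) = 0)}"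

definition zpow_V :: "nat \<Rightarrow> nat \<Rightarrow> (nat \<Rightarrow> T) set" where
  "zpow_V d m = {v \<in> Vd d. \<forall>k<m. v k = (0, 0)}"

definition vscale :: "complex \<Rightarrow> (nat \<Rightarrow> T) \<Rightarrow> (nat \<Rightarrow> T)" where
  "vscale c v = (\<lambda>k. (c * fst (v k), c * snd (v k)))"

end

theory Submission
  imports Defs
begin

lemma mat_act_zero[simp]: "mat_act M (0,0) = (0,0)" "mat_act M 0 = 0" by (simp_all add: mat_act_def zero_prod_def)
lemma formT_sum_left: "formT (sum f A) w = (\<Sum>a\<in>A. formT (f a) w)"
  by (simp add: formT_def fst_sum snd_sum sum_distrib_right sum_subtractf)
lemma stab_low:
  assumes "\<xi> \<in> stab d (xvec d n)" "a + n \<le> d"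
  shows "fst (fst (\<xi> a)) = 0 \<and> fst (snd (\<xi> a)) = 0"
proof -
  have "gact d \<xi> (xvec d n) (a+n) = (0,0)" using assms unfolding stab_def by auto
  moreover have "gact d \<xi> (xvec d n) (a+n) = (\<Sum>a'\<le>a+n. if a' = a then mat_act (\<xi> a) (1,0) else 0)"
  proof -
    have "gact d \<xi> (xvec d n) (a+n) = (\<Sum>a'\<le>a+n. mat_act (\<xi> a') (xvec d n (a+n-a')))"
      unfolding gact_def using assms(2) by simp
    also have "\<dots> = (\<Sum>a'\<le>a+n. if a' = a then mat_act (\<xi> a) (1,0) else 0)"
      using assms(2) by (intro sum.cong) (auto simp: xvec_def zero_prod_def)
    finally show ?thesis .
  qed
  ultimately show ?thesis by (simp add: mat_act_def)
qed


lemma mat_act_zm[simp]: "mat_act ((0,0),(0,0)) u = 0" by (simp add: mat_act_def zero_prod_def)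
lemma formT_zero[simp]: "formT 0 w = 0" "formT (0,0) w = 0" by (simp_all add: formT_def)

definition SS :: "nat \<Rightarrow> nat \<Rightarrow> nat \<Rightarrow> (nat \<Rightarrow> T) set" where
 "SS d N D = {v \<in> Vd d. \<forall>k. (k < N \<longrightarrow> fst (v k) = 0) \<and> (k < D \<longrightarrow> snd (v k) = 0)}"

lemma term_zero:
  assumes v: "v \<in> SS d N D" and ND: "N \<le> D" "d < 2*D" "n \<le> 2*N"
    and xi: "\<xi> \<in> stab d (xvec d n)" and ak: "a \<le> k" "k \<le> d"
  shows "formT (mat_act (\<xi> a) (v (k - a))) (v (d - k)) = 0"
proof -
  obtain p q r s where M: "\<xi> a = ((p,q),(r,s))" by (metis prod.collapse)
  have "\<xi> a \<in> sl2" using xi unfolding stab_def gd_def by auto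
  then have sl: "p + s = 0" using M unfolding sl2_def by auto
  show ?thesis
  proof (cases "a + n \<le> d")
    case True
    then have "p = 0" "r = 0" using stab_low[OF xi True] M by simp_all
    moreover have "k - a < D \<or> d - k < D" using ND ak by linarith
    then have "snd (v (k-a)) = 0 \<or> snd (v (d-k)) = 0" using v unfolding SS_def by auto
    ultimately show ?thesis using sl M by (auto simp: formT_def mat_act_def)
  next
    case False
    then have "k - a < N \<or> d - k < N" using ND ak by linarith
    then have "v (k-a) = (0,0) \<or> v (d-k) = (0,0)" using v ND unfolding SS_def by (auto simp: prod_eq_iff)
    thus ?thesis by (auto simp: formT_def mat_act_def)
  qed
qed

lemma SS_sub_fibre:
  assumes ND: "N \<le> D" "d < 2*D" "n \<le> 2*N"
  shows "SS d N D \<subseteq> zero_fibre d (xvec d n)"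
proof
  fix v assume v: "v \<in> SS d N D"
  have "formV d (gact d \<xi> v) v = 0" if xi: "\<xi> \<in> stab d (xvec d n)" for \<xi>
    unfolding formV_def gact_def
    by (auto intro!: sum.neutral simp: formT_sum_left term_zero[OF v ND xi])
  with v show "v \<in> zero_fibre d (xvec d n)"
    unfolding zero_fibre_def moment_def SS_def by auto
qed

lemma single_formV:
  assumes "a0 + 2*j = d"
    and z: "\<And>b c. b + c = 2*j \<Longrightarrow> b \<noteq> j \<Longrightarrow> formT (mat_act M (v b)) (v c) = 0"
  shows "formV d (gact d (\<lambda>a. if a = a0 then M else ((0,0),(0,0))) v) v = formT (mat_act M (v j)) (v j)"
proof -
  let ?\<xi> = "(\<lambda>a. if a = a0 then M else ((0,0),(0,0)))"
  have g: "gact d ?\<xi> v k = (if a0 \<le> k then mat_act M (v (k-a0)) else 0)" if "k \<le> d" for k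
  proof -
    have "gact d ?\<xi> v k = (\<Sum>a\<le>k. mat_act (?\<xi> a) (v (k-a)))" using that by (simp add: gact_def)
    also have "\<dots> = (\<Sum>a\<le>k. if a = a0 then mat_act M (v (k-a0)) else 0)"
      by (rule sum.cong) auto
    also have "\<dots> = (if a0 \<le> k then mat_act M (v (k-a0)) else 0)" by simp
    finally show ?thesis .
  qed
  have "formV d (gact d ?\<xi> v) v = (\<Sum>k\<le>d. if k = a0 + j then formT (mat_act M (v j)) (v j) else 0)"
    unfolding formV_def
  proof (intro sum.cong refl)
    fix k assume k: "k \<in> {..d}"
    show "formT (gact d ?\<xi> v k) (v (d - k)) = (if k = a0 + j then formT (mat_act M (v j)) (v j) else 0)"
    proof (cases "a0 \<le> k")
      case True
      then show ?thesis using k g assms(1) z[of "k - a0" "d - k"] by auto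
    next
      case False
      then show ?thesis using k g by auto
    qed
  qed
  also have "\<dots> = formT (mat_act M (v j)) (v j)" using assms(1) by simp
  finally show ?thesis .
qed



lemma fibre_sub:
  assumes n: "n \<le> d+1" and v: "v \<in> zero_fibre d (xvec d n)"
  shows "v \<in> SS d ((n+1) div 2) (d div 2 + 1)"
proof -
  have vV: "v \<in> Vd d" and mz: "\<And>\<xi>. \<xi> \<in> stab d (xvec d n) \<Longrightarrow> formV d (gact d \<xi> v) v = 0"
    using v unfolding zero_fibre_def moment_def by auto
  have g2: "\<forall>i<j. snd (v i) = 0" if "j \<le> d div 2 + 1" for j
    using that
  proof (induction j)
    case 0 then show ?case by simp
  next
    case (Suc j)
    then have IH: "\<forall>i<j. snd (v i) = 0" and jd: "2*j \<le> d" by auto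
    define M :: mat2 where "M = ((0,1),(0,0))"
    define \<xi> where "\<xi> = (\<lambda>a. if a = d - 2*j then M else ((0,0),(0,0)))"
    have ma: "mat_act M u = (snd u, 0)" for u by (simp add: M_def mat_act_def)
    have "\<xi> \<in> stab d (xvec d n)"
    proof -
      have "gact d \<xi> (xvec d n) k = (0,0)" for k
      proof -
        have "mat_act (\<xi> a) (xvec d n b) = 0" for a b
          by (cases "a = d - 2*j") (auto simp: \<xi>_def ma xvec_def zero_prod_def)
        then show ?thesis by (simp add: gact_def zero_prod_def[symmetric])
      qed
      moreover have "\<xi> \<in> gd d" using jd by (auto simp: gd_def \<xi>_def M_def sl2_def)
      ultimately show ?thesis unfolding stab_def by auto
    qed
    then have "formV d (gact d \<xi> v) v = 0" by (rule mz)
    moreover have "formV d (gact d \<xi> v) v = formT (mat_act M (v j)) (v j)"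
      unfolding \<xi>_def
    proof (rule single_formV)
      show "d - 2 * j + 2 * j = d" using jd by simp
      fix b c assume "b + c = 2*j" "b \<noteq> j"
      then have "b < j \<or> c < j" by linarith
      then show "formT (mat_act M (v b)) (v c) = 0" using IH by (auto simp: ma formT_def)
    qed
    ultimately have "snd (v j) = 0" by (simp add: ma formT_def)
    then show ?case using IH less_Suc_eq by auto
  qed
  have g1: "\<forall>i<j. fst (v i) = 0" if "j \<le> (n+1) div 2" for j
    using that
  proof (induction j)
    case 0 then show ?case by simp
  next
    case (Suc j)
    then have IH: "\<forall>i<j. fst (v i) = 0" and jn: "2*j < n" by auto
    then have jd: "2*j \<le> d" using n by linarith
    define M :: mat2 where "M = ((0,0),(1,0))"
    define \<xi> where "\<xi> = (\<lambda>a. if a = d - 2*j then M else ((0,0),(0,0)))"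
    have ma: "mat_act M u = (0, fst u)" for u by (simp add: M_def mat_act_def)
    have "\<xi> \<in> stab d (xvec d n)"
    proof -
      have "gact d \<xi> (xvec d n) k = (0,0)" for k
      proof (cases "k \<le> d")
        case True
        have "mat_act (\<xi> a) (xvec d n (k - a)) = 0" if "a \<le> k" for a
          using True that jn by (cases "a = d - 2*j") (auto simp: \<xi>_def ma xvec_def zero_prod_def)
        then show ?thesis by (simp add: gact_def zero_prod_def[symmetric])
      next
        case False then show ?thesis by (simp add: gact_def)
      qed
      moreover have "\<xi> \<in> gd d" using jd by (auto simp: gd_def \<xi>_def M_def sl2_def)
      ultimately show ?thesis unfolding stab_def by auto
    qed
    then have "formV d (gact d \<xi> v) v = 0" by (rule mz)
    moreover have "formV d (gact d \<xi> v) v = formT (mat_act M (v j)) (v j)"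
      unfolding \<xi>_def
    proof (rule single_formV)
      show "d - 2 * j + 2 * j = d" using jd by simp
      fix b c assume "b + c = 2*j" "b \<noteq> j"
      then have "b < j \<or> c < j" by linarith
      then show "formT (mat_act M (v b)) (v c) = 0" using IH by (auto simp: ma formT_def)
    qed
    ultimately have "fst (v j) = 0" by (simp add: ma formT_def)
    then show ?case using IH less_Suc_eq by auto
  qed
  show ?thesis using vV g1[OF order_refl] g2[OF order_refl] unfolding SS_def by auto
qed



lemma fibre_eq:
  assumes n: "n \<le> d+1"
  shows "zero_fibre d (xvec d n) = SS d ((n+1) div 2) (d div 2 + 1)"
  using fibre_sub[OF n] SS_sub_fibre[of "(n+1) div 2" "d div 2 + 1" d n] n by fastforce

lemma int_N: "(int n - 1) div 2 + 1 = int ((n+1) div 2)"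
  by presburger

lemma SS_sum:
  assumes ND: "N \<le> D" "D \<le> d + 1"
  shows "SS d N D = {p + q | p q. p \<in> zpow_e1 d (int N) \<and> q \<in> zpow_V d D}"
proof (intro equalityI subsetI)
  fix s assume s: "s \<in> SS d N D"
  define p where "p = (\<lambda>k. if k < D then s k else (0,0))"
  define q where "q = (\<lambda>k. if k < D then (0,0) else s k)"
  have "s = p + q" by (auto simp: p_def q_def fun_eq_iff zero_prod_def)
  moreover have "p \<in> zpow_e1 d (int N)" using s ND
    by (auto simp: p_def zpow_e1_def SS_def Vd_def)
  moreover have "q \<in> zpow_V d D" using s
    by (auto simp: q_def zpow_V_def SS_def Vd_def)
  ultimately show "s \<in> {p + q | p q. p \<in> zpow_e1 d (int N) \<and> q \<in> zpow_V d D}" by blast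
next
  fix s assume "s \<in> {p + q | p q. p \<in> zpow_e1 d (int N) \<and> q \<in> zpow_V d D}"
  then obtain p q where s: "s = p + q" and p: "p \<in> zpow_e1 d (int N)" and q: "q \<in> zpow_V d D" by blast
  show "s \<in> SS d N D" using p q ND unfolding s SS_def zpow_e1_def zpow_V_def Vd_def
    by (auto simp: zero_prod_def)
qed

lemma vs: "vector_space vscale"
  by unfold_locales (auto simp: vscale_def fun_eq_iff algebra_simps)



interpretation V: vector_space vscale by (rule vs)

definition E1 :: "nat \<Rightarrow> nat \<Rightarrow> T" where "E1 k = (\<lambda>j. if j = k then (1,0) else (0,0))"
definition E2 :: "nat \<Rightarrow> nat \<Rightarrow> T" where "E2 k = (\<lambda>j. if j = k then (0,1) else (0,0))"

lemma sum_fun_apply: "(sum f A) x = (\<Sum>a\<in>A. f a x)"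
  by (induction A rule: infinite_finite_induct) auto

lemma E1_inj: "E1 j = E1 k \<longleftrightarrow> j = k"
  by (auto simp: E1_def fun_eq_iff) 
lemma E2_inj: "E2 j = E2 k \<longleftrightarrow> j = k"
  by (auto simp: E2_def fun_eq_iff) 
lemma E12: "E1 j \<noteq> E2 k"
  by (auto simp: E1_def E2_def fun_eq_iff)

lemma E_comp[simp]: "fst (E1 a j) = (if a = j then 1 else 0)" "snd (E1 a j) = 0"
  "fst (E2 a j) = 0" "snd (E2 a j) = (if a = j then 1 else 0)"
  by (auto simp: E1_def E2_def)

lemma sum_delta_mult[simp]:
  assumes "finite A"
  shows "(\<Sum>a\<in>A. f a * (if a = j then 1 else 0)) = (if j \<in> A then f j else (0::'a::semiring_1))"
proof -
  have "(\<Sum>a\<in>A. f a * (if a = j then 1 else 0)) = (\<Sum>a\<in>A. if a = j then f a else 0)"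
    by (rule sum.cong) auto
  then show ?thesis using assms by simp
qed

lemma dim_SS:
  assumes ND: "N \<le> D" "D \<le> d + 1"
  shows "V.dim (SS d N D) = (d + 1 - N) + (d + 1 - D)"
proof (rule V.dim_unique)
  let ?B = "E1 ` {N..d} \<union> E2 ` {D..d}"
  show "?B \<subseteq> SS d N D"
    by (auto simp: SS_def Vd_def E1_def E2_def)
  have finB: "finite ?B" by simp
  show "SS d N D \<subseteq> V.span ?B"
  proof
    fix s assume s: "s \<in> SS d N D"
    have eq: "s = (\<Sum>k\<in>{N..d}. vscale (fst (s k)) (E1 k)) + (\<Sum>k\<in>{D..d}. vscale (snd (s k)) (E2 k))"
    proof
      fix j
      have "j < N \<Longrightarrow> fst (s j) = 0" "j < D \<Longrightarrow> snd (s j) = 0" "d < j \<Longrightarrow> s j = (0,0)"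
        using s unfolding SS_def Vd_def by auto
      then show "s j = ((\<Sum>k\<in>{N..d}. vscale (fst (s k)) (E1 k)) + (\<Sum>k\<in>{D..d}. vscale (snd (s k)) (E2 k))) j"
        by (auto simp: sum_fun_apply fst_sum snd_sum vscale_def prod_eq_iff)
    qed
    have "(\<Sum>k\<in>{N..d}. vscale (fst (s k)) (E1 k)) \<in> V.span ?B"
      by (intro V.span_sum V.span_scale V.span_base) auto
    moreover have "(\<Sum>k\<in>{D..d}. vscale (snd (s k)) (E2 k)) \<in> V.span ?B"
      by (intro V.span_sum V.span_scale V.span_base) auto
    ultimately show "s \<in> V.span ?B" by (subst eq) (rule V.span_add)
  qed
  show "V.independent ?B"
  proof (rule V.independent_if_scalars_zero[OF finB])
    fix c w assume z: "(\<Sum>v\<in>?B. vscale (c v) v) = 0" and w: "w \<in> ?B"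
    then show "c w = 0"
    proof (cases "w \<in> E1 ` {N..d}")
      case True
      then obtain k where k: "k \<in> {N..d}" "w = E1 k" by auto
      have "0 = fst ((\<Sum>v\<in>?B. vscale (c v) v) k)" using z by simp
      also have "\<dots> = (\<Sum>v\<in>?B. if v = w then c w else 0)"
        unfolding sum_fun_apply fst_sum
        by (rule sum.cong) (auto simp: vscale_def k E1_inj E12 E12[THEN not_sym])
      also have "\<dots> = c w" using w by simp
      finally show ?thesis by simp
    next
      case False
      then obtain k where k: "k \<in> {D..d}" "w = E2 k" using w by auto
      have "0 = snd ((\<Sum>v\<in>?B. vscale (c v) v) k)" using z by simp
      also have "\<dots> = (\<Sum>v\<in>?B. if v = w then c w else 0)"
        unfolding sum_fun_apply snd_sum
        by (rule sum.cong) (auto simp: vscale_def k E2_inj E12 E12[THEN not_sym])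
      also have "\<dots> = c w" using w by simp
      finally show ?thesis by simp
    qed
  qed
  have "card ?B = card (E1 ` {N..d}) + card (E2 ` {D..d})"
    by (rule card_Un_disjoint) (auto simp: E12)
  also have "\<dots> = (d + 1 - N) + (d + 1 - D)"
    by (subst card_image, simp add: inj_on_def E1_inj, subst card_image, simp add: inj_on_def E2_inj) simp
  finally show "card ?B = (d + 1 - N) + (d + 1 - D)" .
qed


theorem proposition3p7:
  fixes d n :: nat
  assumes "n \<le> d + 1"
  shows "zero_fibre d (xvec d n) =
           {p + q | p q. p \<in> zpow_e1 d ((int n - 1) div 2 + 1) \<and> q \<in> zpow_V d (d div 2 + 1)}
         \<and> ((d \<in> {0, 1} \<and> n = 0) \<longrightarrow>
             int (2 * (d + 1)) - int (vector_space.dim vscale (zero_fibre d (xvec d n))) = 1)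
         \<and> (\<not> (d \<in> {0, 1} \<and> n = 0) \<longrightarrow>
             int (2 * (d + 1)) - int (vector_space.dim vscale (zero_fibre d (xvec d n))) \<ge> 2)"
proof -
  define N where "N = (n+1) div 2"
  define D where "D = d div 2 + 1"
  have ND: "N \<le> D" "D \<le> d + 1" using assms unfolding N_def D_def by linarith+
  have F: "zero_fibre d (xvec d n) = SS d N D" using fibre_eq[OF assms] unfolding N_def D_def .
  have dm: "vector_space.dim vscale (zero_fibre d (xvec d n)) = (d + 1 - N) + (d + 1 - D)"
    using dim_SS[OF ND] F by simp
  have c: "int (2 * (d + 1)) - int (vector_space.dim vscale (zero_fibre d (xvec d n))) = int (N + D)"
    using dm ND by simp
  have s: "zero_fibre d (xvec d n) =
           {p + q | p q. p \<in> zpow_e1 d ((int n - 1) div 2 + 1) \<and> q \<in> zpow_V d (d div 2 + 1)}"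
    using F SS_sum[OF ND] unfolding int_N N_def D_def by simp
  show ?thesis
    using s c unfolding N_def D_def by auto
qed

end
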